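(* Let $a\in\mathbb{C}$ and $b=0$, and suppose $\cdot_\lambda\cdot$ is a compatible left-symmetric conformal algebraic structure on $\mathcal{W}(a,0)=\mathbb{C}[\partial]L\oplus\mathbb{C}[\partial]W$ such that $\mathbb{C}[\partial]L$ is a left-symmetric conformal subalgebra. Let $c\in\mathbb{C}$ with $L_\lambda L=(\partial+\lambda+c)L$, and write $L_\lambda W=g_1L+g_2W$, $W_\lambda L=h_1L+h_2W$, $W_\lambda W=k_1L+k_2W$ with $g_i,h_i,k_i\in\mathbb{C}[\lambda,\partial]$. Assume $g_2(\lambda,\partial)=\partial+(a-1)\lambda+c$ and $h_2(\lambda,\partial)=\partial+\lambda+c$. Then one of the following holds: (C2) $h_1=g_1=k_1=k_2=0$; (C3) $a=1$ (so $g_2=\partial+c$), $h_1=g_1=k_1=0$, and $k_2$ is a nonzero constant.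
   Context: A conformal algebra is a $\mathbb{C}[\partial]$-module $R$ with a $\mathbb{C}$-bilinear map $R\times R\to R[\lambda]$, $(x,y)\mapsto x_\lambda y$, satisfying $(\partial x)_\lambda y=-\lambda\, x_\lambda y$ and $x_\lambda(\partial y)=(\partial+\lambda)\,x_\lambda y$. For $x,y\in R$, $y_{-\lambda-\partial}x$ means: write $y_\mu x=\sum_j \mu^j z_j$ and set $y_{-\lambda-\partial}x=\sum_j(-\lambda-\partial)^j z_j$. A left-symmetric conformal algebra is a conformal algebra with $(x_\lambda y)_{\lambda+\mu}z-x_\lambda(y_\mu z)=(y_\mu x)_{\lambda+\mu}z-y_\mu(x_\lambda z)$. A compatible left-symmetric conformal algebraic structure on a Lie conformal algebra $(R,[\cdot_\lambda\cdot])$ is a left-symmetric conformal product on the same $\mathbb{C}[\partial]$-module with $x_\lambda y-y_{-\lambda-\partial}x=[x_\lambda y]$ for all $x,y$. $\mathcal{W}(a,b)$ is the free $\mathbb{C}[\partial]$-module with basis $L,W$ and Lie conformal brackets $[L_\lambda L]=(\partial+2\lambda)L$, $[L_\lambda W]=(\partial+a\lambda+b)W$, $[W_\lambda W]=0$. "$\mathbb{C}[\partial]L$ is a left-symmetric conformal subalgebra" means $L_\lambda L\in(\mathbb{C}[\partial]L)[\lambda]$; in that case $L_\lambda L=(\partial+\lambda+c)L$ for some $c\in\mathbb{C}$. *)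

theory Defs
  imports "HOL-Computational_Algebra.Polynomial" "HOL-Library.Product_Plus"
begin

text \<open>The free C[d]-module R = C[d]L + C[d]W is represented by pairs (p, q) of
  complex polynomials in d, standing for p(d) L + q(d) W.
  R[lambda] is represented by pairs of bivariate polynomials
  (complex poly poly: outer variable lambda, inner variable d = the action of
  partial), standing for P(lambda,d) L + Q(lambda,d) W.\<close>

type_synonym R = "complex poly \<times> complex poly"
type_synonym RL = "complex poly poly \<times> complex poly poly"

definition L0 :: R where "L0 = (1, 0)"
definition W0 :: R where "W0 = (0, 1)"

definition Dp :: "complex poly" where "Dp = [:0, 1:]"

definition D :: "R \<Rightarrow> R" where "D x = (Dp * fst x, Dp * snd x)"
definition DRL :: "RL \<Rightarrow> RL" where "DRL P = ([:Dp:] * fst P, [:Dp:] * snd P)"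

definition lamRL :: "RL \<Rightarrow> RL" where "lamRL P = ([:0, 1:] * fst P, [:0, 1:] * snd P)"

definition rsc :: "complex \<Rightarrow> R \<Rightarrow> R" where "rsc c x = (smult c (fst x), smult c (snd x))"
definition rlsc :: "complex \<Rightarrow> RL \<Rightarrow> RL" where "rlsc c P = (smult [:c:] (fst P), smult [:c:] (snd P))"

definition rlsm :: "complex poly poly \<Rightarrow> RL \<Rightarrow> RL" where "rlsm s P = (s * fst P, s * snd P)"

definition evalL :: "RL \<Rightarrow> complex \<Rightarrow> R" where
  "evalL P l = (poly (fst P) [:l:], poly (snd P) [:l:])"

text \<open>the substitution lambda := -lambda-d : from y_mu x to y_{-lambda-d} x\<close>
definition skew :: "RL \<Rightarrow> RL" where
  "skew P = (pcompose (fst P) [:- Dp, -1:], pcompose (snd P) [:- Dp, -1:])"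

definition lift_neg :: "complex poly \<Rightarrow> complex poly poly" where
  "lift_neg p = pcompose (map_poly (\<lambda>c. [:c:]) p) [:0, -1:]"
definition lift_shift :: "complex poly \<Rightarrow> complex poly poly" where
  "lift_shift q = pcompose (map_poly (\<lambda>c. [:c:]) q) [:Dp, 1:]"

text \<open>Lie conformal brackets of W(a,0) on the basis (b = 0); [W_lambda L] is
  obtained from [L_lambda W] by skew-symmetry: -(d + a(-lambda-d)) = (a-1)d + a lambda\<close>
definition brLL :: RL where "brLL = ([:Dp, 2:], 0)"
definition brLW :: "complex \<Rightarrow> RL" where "brLW a = (0, [:Dp, [:a:]:])"
definition brWL :: "complex \<Rightarrow> RL" where "brWL a = (0, [:smult (a - 1) Dp, [:a:]:])"

text \<open>The Lie conformal bracket of W(a,0), extended sesquilinearly: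
  [(p(d)A)_lambda (q(d)B)] = p(-lambda) q(d+lambda) [A_lambda B].\<close>
definition bracketW :: "complex \<Rightarrow> R \<Rightarrow> R \<Rightarrow> RL" where
  "bracketW a x y =
     rlsm (lift_neg (fst x) * lift_shift (fst y)) brLL
   + rlsm (lift_neg (fst x) * lift_shift (snd y)) (brLW a)
   + rlsm (lift_neg (snd x) * lift_shift (fst y)) (brWL a)"

definition conformal_product :: "(R \<Rightarrow> R \<Rightarrow> RL) \<Rightarrow> bool" where
  "conformal_product mul \<longleftrightarrow>
     (\<forall>x y z. mul (x + y) z = mul x z + mul y z) \<and>
     (\<forall>x y z. mul x (y + z) = mul x y + mul x z) \<and>
     (\<forall>c x y. mul (rsc c x) y = rlsc c (mul x y)) \<and>
     (\<forall>c x y. mul x (rsc c y) = rlsc c (mul x y)) \<and>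
     (\<forall>x y. mul (D x) y = - lamRL (mul x y)) \<and>
     (\<forall>x y. mul x (D y) = DRL (mul x y) + lamRL (mul x y))"

text \<open>left-symmetry identity, as an identity of polynomials in lambda, mu
  (with coefficients in R), checked at all complex values l, m\<close>
definition left_symmetric :: "(R \<Rightarrow> R \<Rightarrow> RL) \<Rightarrow> bool" where
  "left_symmetric mul \<longleftrightarrow>
     (\<forall>x y z l m.
        evalL (mul (evalL (mul x y) l) z) (l + m) - evalL (mul x (evalL (mul y z) m)) l
      = evalL (mul (evalL (mul y x) m) z) (l + m) - evalL (mul y (evalL (mul x z) l)) m)"

definition compatible_LSCA_W :: "complex \<Rightarrow> (R \<Rightarrow> R \<Rightarrow> RL) \<Rightarrow> bool" where
  "compatible_LSCA_W a mul \<longleftrightarrow>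
     conformal_product mul \<and> left_symmetric mul \<and>
     (\<forall>x y. mul x y - skew (mul y x) = bracketW a x y)"

end

theory Submission
  imports Defs
begin


definition ev2 :: "complex poly poly \<Rightarrow> complex \<Rightarrow> complex \<Rightarrow> complex" where
  "ev2 P l t = poly (poly P [:l:]) t"

lemma ev2_subst: "poly (poly P q) t = ev2 P (poly q t) t"
  by (induct P) (auto simp: ev2_def)

lemma ev2_map: "ev2 P l t = poly (map_poly (\<lambda>c. poly c t) P) l"
  by (induct P) (auto simp: ev2_def map_poly_pCons)

lemma poly_zero_cofinite:
  fixes p :: "complex poly"
  assumes "finite S" "\<forall>x. x \<notin> S \<longrightarrow> poly p x = 0"
  shows "p = 0"
proof (rule ccontr)
  assume "p \<noteq> 0"
  hence "finite {x. poly p x = 0}" by (rule poly_roots_finite)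
  moreover have "UNIV - S \<subseteq> {x. poly p x = 0}" using assms(2) by auto
  ultimately have "finite (UNIV - S)" by (rule rev_finite_subset)
  hence "finite (UNIV :: complex set)" using assms(1) by simp
  thus False using infinite_UNIV_char_0 by blast
qed

lemma poly_eq_except:
  fixes p q :: "complex poly"
  assumes "\<forall>x. x \<noteq> x0 \<longrightarrow> poly p x = poly q x"
  shows "poly p x0 = poly q x0"
proof -
  have "p - q = 0" by (rule poly_zero_cofinite[of "{x0}"]) (use assms in auto)
  thus ?thesis by simp
qed

lemma cont_t:
  assumes "\<forall>s. s \<noteq> s0 \<longrightarrow> ev2 P l s = v"
  shows "ev2 P l s0 = v"
  using poly_eq_except[of s0 "poly P [:l:]" "[:v:]"] assms by (simp add: ev2_def)

lemma cont_l:
  assumes "\<forall>x. x \<noteq> x0 \<longrightarrow> ev2 P x t = ev2 P x t'"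
  shows "ev2 P x0 t = ev2 P x0 t'"
  using poly_eq_except[of x0 "map_poly (\<lambda>c. poly c t) P" "map_poly (\<lambda>c. poly c t') P"] assms
  by (simp add: ev2_map)

lemma ev2_zero:
  assumes "\<forall>l t. ev2 P l t = 0"
  shows "P = 0"
proof -
  have z: "poly P [:l:] = 0" for l
    using assms poly_all_0_iff_0 unfolding ev2_def by blast
  show ?thesis
  proof (rule ccontr)
    assume "P \<noteq> 0"
    hence "finite {x. poly P x = 0}" by (rule poly_roots_finite)
    moreover have "range (\<lambda>l. [:l:]) \<subseteq> {x. poly P x = 0}" using z by auto
    ultimately have "finite (range (\<lambda>l::complex. [:l:]))" by (rule rev_finite_subset)
    moreover have "inj (\<lambda>l::complex. [:l:])" by (auto intro: injI)
    ultimately have "finite (UNIV :: complex set)" using finite_imageD by blast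
    thus False using infinite_UNIV_char_0 by blast
  qed
qed

lemma periodic:
  fixes p :: "complex poly"
  assumes d: "d \<noteq> 0" and h: "\<forall>t. t \<noteq> t0 \<longrightarrow> poly p (t + d) = poly p t"
  shows "poly p x = poly p 0"
proof -
  have e0: "poly (pcompose p [:d, 1:]) t0 = poly p t0"
    using poly_eq_except[of t0 "pcompose p [:d, 1:]" p] h
    by (simp add: poly_pcompose add.commute)
  have all: "poly p (t + d) = poly p t" for t
    using e0 h by (cases "t = t0") (auto simp: poly_pcompose add.commute)
  have nd: "poly p (of_nat n * d) = poly p 0" for n
  proof (induct n)
    case (Suc n)
    have "poly p (of_nat (Suc n) * d) = poly p (of_nat n * d + d)" by (simp add: distrib_right add.commute)
    also have "\<dots> = poly p (of_nat n * d)" by (rule all)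
    finally show ?case using Suc by simp
  qed simp
  have "p - [:poly p 0:] = 0"
  proof (rule ccontr)
    assume ne: "p - [:poly p 0:] \<noteq> 0"
    hence "finite {x. poly (p - [:poly p 0:]) x = 0}" by (rule poly_roots_finite)
    moreover have "range (\<lambda>n::nat. of_nat n * d) \<subseteq> {x. poly (p - [:poly p 0:]) x = 0}"
      using nd by auto
    ultimately have "finite (range (\<lambda>n::nat. of_nat n * d))" by (rule rev_finite_subset)
    moreover have "inj (\<lambda>n::nat. of_nat n * d)" using d by (auto intro!: injI)
    ultimately show False using finite_imageD by blast
  qed
  hence "poly (p - [:poly p 0:]) x = 0" by simp
  thus ?thesis by simp
qed



lemma mul_zero_right: assumes "conformal_product mul" shows "mul x 0 = 0"
proof -
  have "mul x (0 + 0) = mul x 0 + mul x 0" using assms unfolding conformal_product_def by blast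
  thus ?thesis by simp
qed

lemma mul_zero_left: assumes "conformal_product mul" shows "mul 0 x = 0"
proof -
  have "mul (0 + 0) x = mul 0 x + mul 0 x" using assms unfolding conformal_product_def by blast
  thus ?thesis by simp
qed

lemma pCons_split1: "(pCons a p, 0::complex poly) = rsc a L0 + D (p, 0)"
  by (simp add: rsc_def L0_def D_def Dp_def)

lemma pCons_split2: "(0::complex poly, pCons a p) = rsc a W0 + D (0, p)"
  by (simp add: rsc_def W0_def D_def Dp_def)

lemma left1:
  assumes cp: "conformal_product mul"
  shows "ev2 (fst (mul (p, 0) z)) l t = poly p (-l) * ev2 (fst (mul L0 z)) l t
       \<and> ev2 (snd (mul (p, 0) z)) l t = poly p (-l) * ev2 (snd (mul L0 z)) l t"
proof (induct p)
  case 0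
  then show ?case using mul_zero_left[OF cp] by (simp add: ev2_def zero_prod_def)
next
  case (pCons a p)
  have A: "mul (x + y) w = mul x w + mul y w" and S: "mul (rsc c x) w = rlsc c (mul x w)"
    and Dl: "mul (D x) w = - lamRL (mul x w)" for x y w c
    using cp unfolding conformal_product_def by blast+
  have "mul (pCons a p, 0) z = rlsc a (mul L0 z) + - lamRL (mul (p, 0) z)"
    unfolding pCons_split1 A S Dl ..
  then show ?case using pCons(2)
    by (simp add: rlsc_def lamRL_def ev2_def algebra_simps)
qed

lemma left2:
  assumes cp: "conformal_product mul"
  shows "ev2 (fst (mul (0, p) z)) l t = poly p (-l) * ev2 (fst (mul W0 z)) l t
       \<and> ev2 (snd (mul (0, p) z)) l t = poly p (-l) * ev2 (snd (mul W0 z)) l t"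
proof (induct p)
  case 0
  then show ?case using mul_zero_left[OF cp] by (simp add: ev2_def zero_prod_def)
next
  case (pCons a p)
  have A: "mul (x + y) w = mul x w + mul y w" and S: "mul (rsc c x) w = rlsc c (mul x w)"
    and Dl: "mul (D x) w = - lamRL (mul x w)" for x y w c
    using cp unfolding conformal_product_def by blast+
  have "mul (0, pCons a p) z = rlsc a (mul W0 z) + - lamRL (mul (0, p) z)"
    unfolding pCons_split2 A S Dl ..
  then show ?case using pCons(2)
    by (simp add: rlsc_def lamRL_def ev2_def algebra_simps)
qed

lemma right1:
  assumes cp: "conformal_product mul"
  shows "ev2 (fst (mul z (p, 0))) l t = poly p (t + l) * ev2 (fst (mul z L0)) l t
       \<and> ev2 (snd (mul z (p, 0))) l t = poly p (t + l) * ev2 (snd (mul z L0)) l t"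
proof (induct p)
  case 0
  then show ?case using mul_zero_right[OF cp] by (simp add: ev2_def zero_prod_def)
next
  case (pCons a p)
  have A: "mul w (x + y) = mul w x + mul w y" and S: "mul w (rsc c x) = rlsc c (mul w x)"
    and Dr: "mul w (D x) = DRL (mul w x) + lamRL (mul w x)" for x y w c
    using cp unfolding conformal_product_def by blast+
  have "mul z (pCons a p, 0) = rlsc a (mul z L0) + (DRL (mul z (p, 0)) + lamRL (mul z (p, 0)))"
    unfolding pCons_split1 A S Dr ..
  then show ?case using pCons(2)
    by (simp add: rlsc_def lamRL_def DRL_def Dp_def ev2_def algebra_simps)
qed

lemma right2:
  assumes cp: "conformal_product mul"
  shows "ev2 (fst (mul z (0, p))) l t = poly p (t + l) * ev2 (fst (mul z W0)) l t
       \<and> ev2 (snd (mul z (0, p))) l t = poly p (t + l) * ev2 (snd (mul z W0)) l t"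
proof (induct p)
  case 0
  then show ?case using mul_zero_right[OF cp] by (simp add: ev2_def zero_prod_def)
next
  case (pCons a p)
  have A: "mul w (x + y) = mul w x + mul w y" and S: "mul w (rsc c x) = rlsc c (mul w x)"
    and Dr: "mul w (D x) = DRL (mul w x) + lamRL (mul w x)" for x y w c
    using cp unfolding conformal_product_def by blast+
  have "mul z (0, pCons a p) = rlsc a (mul z W0) + (DRL (mul z (0, p)) + lamRL (mul z (0, p)))"
    unfolding pCons_split2 A S Dr ..
  then show ?case using pCons(2)
    by (simp add: rlsc_def lamRL_def DRL_def Dp_def ev2_def algebra_simps)
qed

lemma leftg:
  assumes cp: "conformal_product mul"
  shows "ev2 (fst (mul (p, q) z)) l t = poly p (-l) * ev2 (fst (mul L0 z)) l t + poly q (-l) * ev2 (fst (mul W0 z)) l t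
       \<and> ev2 (snd (mul (p, q) z)) l t = poly p (-l) * ev2 (snd (mul L0 z)) l t + poly q (-l) * ev2 (snd (mul W0 z)) l t"
proof -
  have "mul (p, q) z = mul (p, 0) z + mul (0, q) z"
    using cp unfolding conformal_product_def by (metis add_Pair add.right_neutral add.left_neutral)
  thus ?thesis using left1[OF cp, of p z l t] left2[OF cp, of q z l t] by (simp add: ev2_def)
qed

lemma rightg:
  assumes cp: "conformal_product mul"
  shows "ev2 (fst (mul z (p, q))) l t = poly p (t + l) * ev2 (fst (mul z L0)) l t + poly q (t + l) * ev2 (fst (mul z W0)) l t
       \<and> ev2 (snd (mul z (p, q))) l t = poly p (t + l) * ev2 (snd (mul z L0)) l t + poly q (t + l) * ev2 (snd (mul z W0)) l t"
proof -
  have "mul z (p, q) = mul z (p, 0) + mul z (0, q)"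
    using cp unfolding conformal_product_def by (metis add_Pair add.right_neutral add.left_neutral)
  thus ?thesis using right1[OF cp, of z p l t] right2[OF cp, of z q l t] by (simp add: ev2_def)
qed



lemma evL:
  assumes cp: "conformal_product mul"
  shows "poly (fst (evalL (mul (evalL X l) z) l')) t = ev2 (fst X) l (-l') * ev2 (fst (mul L0 z)) l' t + ev2 (snd X) l (-l') * ev2 (fst (mul W0 z)) l' t"
    "poly (snd (evalL (mul (evalL X l) z) l')) t = ev2 (fst X) l (-l') * ev2 (snd (mul L0 z)) l' t + ev2 (snd X) l (-l') * ev2 (snd (mul W0 z)) l' t"
  using leftg[OF cp, of "poly (fst X) [:l:]" "poly (snd X) [:l:]" z l' t]
  by (simp_all add: evalL_def ev2_def)

lemma evR:
  assumes cp: "conformal_product mul"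
  shows "poly (fst (evalL (mul z (evalL X l)) l')) t = ev2 (fst X) l (t + l') * ev2 (fst (mul z L0)) l' t + ev2 (snd X) l (t + l') * ev2 (fst (mul z W0)) l' t"
    "poly (snd (evalL (mul z (evalL X l)) l')) t = ev2 (fst X) l (t + l') * ev2 (snd (mul z L0)) l' t + ev2 (snd X) l (t + l') * ev2 (snd (mul z W0)) l' t"
  using rightg[OF cp, of z "poly (fst X) [:l:]" "poly (snd X) [:l:]" l' t]
  by (simp_all add: evalL_def ev2_def)

lemma ls_pt:
  assumes cp: "conformal_product mul" and ls: "left_symmetric mul"
  shows "(ev2 (fst (mul x y)) l (-(l+m)) * ev2 (fst (mul L0 z)) (l+m) t + ev2 (snd (mul x y)) l (-(l+m)) * ev2 (fst (mul W0 z)) (l+m) t)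
 - (ev2 (fst (mul y z)) m (t+l) * ev2 (fst (mul x L0)) l t + ev2 (snd (mul y z)) m (t+l) * ev2 (fst (mul x W0)) l t)
= (ev2 (fst (mul y x)) m (-(l+m)) * ev2 (fst (mul L0 z)) (l+m) t + ev2 (snd (mul y x)) m (-(l+m)) * ev2 (fst (mul W0 z)) (l+m) t)
 - (ev2 (fst (mul x z)) l (t+m) * ev2 (fst (mul y L0)) m t + ev2 (snd (mul x z)) l (t+m) * ev2 (fst (mul y W0)) m t)
 \<and> (ev2 (fst (mul x y)) l (-(l+m)) * ev2 (snd (mul L0 z)) (l+m) t + ev2 (snd (mul x y)) l (-(l+m)) * ev2 (snd (mul W0 z)) (l+m) t)
 - (ev2 (fst (mul y z)) m (t+l) * ev2 (snd (mul x L0)) l t + ev2 (snd (mul y z)) m (t+l) * ev2 (snd (mul x W0)) l t)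
= (ev2 (fst (mul y x)) m (-(l+m)) * ev2 (snd (mul L0 z)) (l+m) t + ev2 (snd (mul y x)) m (-(l+m)) * ev2 (snd (mul W0 z)) (l+m) t)
 - (ev2 (fst (mul x z)) l (t+m) * ev2 (snd (mul y L0)) m t + ev2 (snd (mul x z)) l (t+m) * ev2 (snd (mul y W0)) m t)"
proof -
  have E: "evalL (mul (evalL (mul x y) l) z) (l + m) - evalL (mul x (evalL (mul y z) m)) l
      = evalL (mul (evalL (mul y x) m) z) (l + m) - evalL (mul y (evalL (mul x z) l)) m"
    using ls unfolding left_symmetric_def by blast
  have E1: "poly (fst (evalL (mul (evalL (mul x y) l) z) (l + m) - evalL (mul x (evalL (mul y z) m)) l)) t
      = poly (fst (evalL (mul (evalL (mul y x) m) z) (l + m) - evalL (mul y (evalL (mul x z) l)) m)) t"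
    using E by simp
  have E2: "poly (snd (evalL (mul (evalL (mul x y) l) z) (l + m) - evalL (mul x (evalL (mul y z) m)) l)) t
      = poly (snd (evalL (mul (evalL (mul y x) m) z) (l + m) - evalL (mul y (evalL (mul x z) l)) m)) t"
    using E by simp
  show ?thesis
    using E1 E2 unfolding fst_diff snd_diff poly_diff evL[OF cp] evR[OF cp]
    by (simp add: add.commute)
qed

lemma skew_pt: "ev2 (fst (skew P)) l t = ev2 (fst P) (- l - t) t \<and> ev2 (snd (skew P)) l t = ev2 (snd P) (- l - t) t"
proof -
  have "poly (poly (pcompose Q [:- Dp, -1:]) [:l:]) t = ev2 Q (- l - t) t" for Q
    unfolding poly_pcompose ev2_subst by (simp add: Dp_def ev2_def algebra_simps)
  thus ?thesis by (simp add: skew_def ev2_def)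
qed

lemma compat_pt:
  assumes "compatible_LSCA_W a mul"
  shows "ev2 (fst (mul x y)) l t - ev2 (fst (mul y x)) (- l - t) t = ev2 (fst (bracketW a x y)) l t
    \<and> ev2 (snd (mul x y)) l t - ev2 (snd (mul y x)) (- l - t) t = ev2 (snd (bracketW a x y)) l t"
proof -
  have "mul x y - skew (mul y x) = bracketW a x y" using assms unfolding compatible_LSCA_W_def by blast
  hence "ev2 (fst (mul x y - skew (mul y x))) l t = ev2 (fst (bracketW a x y)) l t"
     "ev2 (snd (mul x y - skew (mul y x))) l t = ev2 (snd (bracketW a x y)) l t" by simp_all
  thus ?thesis using skew_pt[of "mul y x" l t] by (simp add: ev2_def)
qed

lemma br_LW: "fst (bracketW a L0 W0) = 0"
  by (simp add: bracketW_def L0_def W0_def lift_neg_def lift_shift_def rlsm_def brLL_def brLW_def brWL_def)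

lemma br_WW: "bracketW a W0 W0 = 0"
  by (simp add: bracketW_def L0_def W0_def lift_neg_def lift_shift_def rlsm_def brLL_def brLW_def brWL_def zero_prod_def)



lemma cont_t2:
  assumes "\<forall>s. s \<noteq> s0 \<longrightarrow> ev2 P l s = ev2 P l' s"
  shows "ev2 P l s0 = ev2 P l' s0"
  using poly_eq_except[of s0 "poly P [:l:]" "poly P [:l':]"] assms by (simp add: ev2_def)

theorem lemma3p6:
  fixes a c :: complex and mul :: "R \<Rightarrow> R \<Rightarrow> RL"
  assumes "compatible_LSCA_W a mul"
    and "mul L0 L0 = ([:[:c, 1:], 1:], 0)"
    and "snd (mul L0 W0) = [:[:c, 1:], [:a - 1:]:]"
    and "snd (mul W0 L0) = [:[:c, 1:], 1:]"
  shows "(fst (mul W0 L0) = 0 \<and> fst (mul L0 W0) = 0 \<and> mul W0 W0 = (0, 0))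
       \<or> (a = 1 \<and> fst (mul W0 L0) = 0 \<and> fst (mul L0 W0) = 0 \<and> fst (mul W0 W0) = 0
          \<and> (\<exists>k::complex. k \<noteq> 0 \<and> snd (mul W0 W0) = [:[:k:]:]))"
proof -
  have cp: "conformal_product mul" and ls: "left_symmetric mul"
    using assms(1) unfolding compatible_LSCA_W_def by blast+
  define g where "g = (\<lambda>l t. ev2 (fst (mul L0 W0)) l t)"
  define h where "h = (\<lambda>l t. ev2 (fst (mul W0 L0)) l t)"
  define k1 where "k1 = (\<lambda>l t. ev2 (fst (mul W0 W0)) l t)"
  define k2 where "k2 = (\<lambda>l t. ev2 (snd (mul W0 W0)) l t)"
  have gf: "ev2 (fst (mul L0 W0)) l t = g l t" for l t by (simp add: g_def)
  have hf: "ev2 (fst (mul W0 L0)) l t = h l t" for l t by (simp add: h_def)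
  have k1f: "ev2 (fst (mul W0 W0)) l t = k1 l t" for l t by (simp add: k1_def)
  have k2f: "ev2 (snd (mul W0 W0)) l t = k2 l t" for l t by (simp add: k2_def)
  have LL1: "ev2 (fst (mul L0 L0)) l t = c + t + l" for l t using assms(2) by (simp add: ev2_def)
  have LL2: "ev2 (snd (mul L0 L0)) l t = 0" for l t using assms(2) by (simp add: ev2_def)
  have LW2: "ev2 (snd (mul L0 W0)) l t = c + t + (a - 1) * l" for l t using assms(3) by (simp add: ev2_def)
  have WL2: "ev2 (snd (mul W0 L0)) l t = c + t + l" for l t using assms(4) by (simp add: ev2_def)
  have cLW: "g l t = h (- l - t) t" for l t
    using conjunct1[OF compat_pt[OF assms(1), of L0 W0 l t]] br_LW[of a] unfolding gf hf
    by (simp add: ev2_def)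
  have C1: "k1 l t = k1 (- l - t) t" and C2: "k2 l t = k2 (- l - t) t" for l t
    using compat_pt[OF assms(1), of W0 W0 l t] br_WW[of a] unfolding k1f k2f
    by (simp_all add: ev2_def)
  have F3: "((a-1)*l - m) * k2 (l+m) t = (t+(a-1)*l+c) * k2 m (t+l) - (t+m+c) * g l (t+m) - (t+(a-1)*l+m+c) * k2 m t" for l m t
  proof -
    have e: "(g l (-(l+m)) * (c + t + (a - 1) * (l+m)) + (c + (-(l+m)) + (a - 1) * l) * k2 (l+m) t)
       - (ev2 (fst (mul W0 W0)) m (t+l) * 0 + k2 m (t+l) * (c + t + (a - 1) * l))
       = (h m (-(l+m)) * (c + t + (a - 1) * (l+m)) + (c + (-(l+m)) + m) * k2 (l+m) t)
       - (g l (t+m) * (c + t + m) + (c + (t+m) + (a - 1) * l) * k2 m t)"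
      using conjunct2[OF ls_pt[OF cp ls, of L0 W0 l m W0 t]]
      unfolding gf hf k2f LL1 LL2 LW2 WL2 .
    have "g l (-(l+m)) = h m (-(l+m))" using cLW[of l "-(l+m)"] by simp
    with e show ?thesis by (simp add: algebra_simps)
  qed
  have D: "((a-1)*l + t + c) * (k2 (c-l) t - k2 (c-l) (t+l)) = -((a-1)*l * k2 c t)" for l t
  proof -
    have e: "((a-1)*l + t + c) * k2 (l - t - c) t = (t+(a-1)*l+c) * k2 (-t-c) (t+l) - ((a-1)*l) * k2 (-t-c) t"
      using F3[of l "-t-c" t] by (simp add: algebra_simps)
    have 1: "k2 (l - t - c) t = k2 (c - l) t" using C2[of "l-t-c" t] by (simp add: algebra_simps)
    have 2: "k2 (-t-c) (t+l) = k2 (c - l) (t+l)" using C2[of "-t-c" "t+l"] by (simp add: algebra_simps)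
    have 3: "k2 (-t-c) t = k2 c t" using C2[of "-t-c" t] by (simp add: algebra_simps)
    show ?thesis using e unfolding 1 2 3 by (simp add: algebra_simps)
  qed
  have P1: "k2 c s = 0" if a1: "a \<noteq> 1" for s
  proof -
    have "k2 c s' = 0" if s': "s' \<noteq> -c" for s'
    proof -
      define l where "l = -(s'+c)/(a-1)"
      have n1: "s' + c \<noteq> 0" using s' by (metis add_eq_0_iff2 minus_minus)
      have n2: "a - 1 \<noteq> 0" using a1 by simp
      have l0: "l \<noteq> 0" unfolding l_def using n1 n2 by (metis divide_eq_0_iff neg_equal_0_iff_equal)
      have "(a-1)*l = -(s'+c)" unfolding l_def using n2 by simp
      hence "(a-1)*l + s' + c = 0" by simp
      hence "(a-1)*l * k2 c s' = 0" using D[of l s'] by (metis add.commute add.left_commute mult_zero_left neg_equal_0_iff_equal)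
      thus ?thesis using l0 n2 by simp
    qed
    hence "\<forall>s'. s' \<noteq> -c \<longrightarrow> ev2 (snd (mul W0 W0)) c s' = 0" by (simp add: k2_def)
    hence "ev2 (snd (mul W0 W0)) c (-c) = 0" by (rule cont_t)
    hence "ev2 (snd (mul W0 W0)) c s = 0" using \<open>\<forall>s'. s' \<noteq> -c \<longrightarrow> ev2 (snd (mul W0 W0)) c s' = 0\<close> by (cases "s = -c") auto
    thus ?thesis by (simp add: k2_def)
  qed
  have P2a: "k2 \<nu> t = k2 \<nu> 0" if nc: "\<nu> \<noteq> c" for \<nu> t
  proof -
    define l where "l = c - \<nu>"
    have l0: "l \<noteq> 0" using nc by (simp add: l_def)
    have z: "(a-1) * k2 c t' = 0" for t' using P1 by (cases "a = 1") auto
    have "\<forall>t'. t' \<noteq> -((a-1)*l) - c \<longrightarrow> poly (poly (snd (mul W0 W0)) [:\<nu>:]) (t' + l) = poly (poly (snd (mul W0 W0)) [:\<nu>:]) t'"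
    proof (intro allI impI)
      fix t' assume "t' \<noteq> -((a-1)*l) - c"
      hence ne: "((a-1)*l + t' + c) \<noteq> 0" by (metis add.commute add_diff_cancel_right' add_uminus_conv_diff diff_add_cancel minus_add_distrib neg_eq_iff_add_eq_0)
      have "((a-1)*l + t' + c) * (k2 (c - l) t' - k2 (c - l) (t'+l)) = 0"
        using D[of l t'] z[of t'] by (simp add: mult.assoc mult.left_commute)
      hence "k2 (c - l) t' = k2 (c - l) (t'+l)" using ne by simp
      hence "k2 \<nu> t' = k2 \<nu> (t'+l)" by (simp add: l_def)
      thus "poly (poly (snd (mul W0 W0)) [:\<nu>:]) (t' + l) = poly (poly (snd (mul W0 W0)) [:\<nu>:]) t'"
        by (simp add: k2_def ev2_def)
    qed
    hence "poly (poly (snd (mul W0 W0)) [:\<nu>:]) t = poly (poly (snd (mul W0 W0)) [:\<nu>:]) 0"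
      by (rule periodic[OF l0])
    thus ?thesis by (simp add: k2_def ev2_def)
  qed
  have P2: "k2 \<nu> t = k2 \<nu> 0" for \<nu> t
  proof (cases "\<nu> = c")
    case False thus ?thesis by (rule P2a)
  next
    case True
    show ?thesis
    proof (cases "a = 1")
      case False thus ?thesis using P1[OF False, of t] P1[OF False, of 0] True by simp
    next
      case True
      have "\<forall>x. x \<noteq> c \<longrightarrow> ev2 (snd (mul W0 W0)) x t = ev2 (snd (mul W0 W0)) x 0"
      proof (intro allI impI)
        fix x assume "x \<noteq> c"
        from P2a[OF this, of t] show "ev2 (snd (mul W0 W0)) x t = ev2 (snd (mul W0 W0)) x 0"
          unfolding k2_def .
      qed
      hence "ev2 (snd (mul W0 W0)) c t = ev2 (snd (mul W0 W0)) c 0" by (rule cont_l)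
      thus ?thesis using \<open>\<nu> = c\<close> by (simp add: k2_def)
    qed
  qed
  define K where "K = k2 0 0"
  have P3: "k2 \<nu> t = K" for \<nu> t
  proof -
    have "k2 \<nu> (-\<nu>) = k2 0 (-\<nu>)" using C2[of \<nu> "-\<nu>"] by simp
    thus ?thesis using P2[of \<nu> t] P2[of \<nu> "-\<nu>"] P2[of 0 "-\<nu>"] by (simp add: K_def)
  qed
  have P4: "K = 0" if "a \<noteq> 1" using P1[OF that, of 0] P3[of c 0] by simp
  have aK: "(a-1) * K = 0" using P4 by (cases "a = 1") auto
  have G0: "(t + c) * g l t = 0" for l t
  proof -
    have e: "((a-1)*l - 0) * K = (t+(a-1)*l+c) * K - (t+0+c) * g l (t+0) - (t+(a-1)*l+0+c) * K"
      using F3[of l 0 t] unfolding P3 .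
    have "(t + c) * g l t = - (l * ((a-1) * K))" using e by (simp add: algebra_simps)
    thus ?thesis using aK by simp
  qed
  have G: "g l t = 0" for l t
  proof -
    have "\<forall>s. s \<noteq> -c \<longrightarrow> ev2 (fst (mul L0 W0)) l s = 0"
    proof (intro allI impI)
      fix s assume "s \<noteq> -c"
      hence "s + c \<noteq> 0" by (metis add_eq_0_iff2 minus_minus)
      thus "ev2 (fst (mul L0 W0)) l s = 0" using G0[of s l] by (simp add: g_def)
    qed
    moreover have "ev2 (fst (mul L0 W0)) l (-c) = 0" using calculation by (rule cont_t)
    ultimately show ?thesis by (cases "t = -c") (auto simp: g_def)
  qed
  have H: "h x t = 0" for x t
    using cLW[of "-x-t" t] G[of "-x-t" t] by simp
  have K1a: "(c + t + l + m) * (k1 l t - k1 m t) = 0" for l m t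
  proof -
    have e: "(k1 l (-(l+m)) * (c + t + (l+m)) + k2 l (-(l+m)) * h (l+m) t) - (h m (t+l) * h l t + (c + (t+l) + m) * k1 l t)
      = (k1 m (-(l+m)) * (c + t + (l+m)) + k2 m (-(l+m)) * h (l+m) t) - (h l (t+m) * h m t + (c + (t+m) + l) * k1 m t)"
      using conjunct1[OF ls_pt[OF cp ls, of W0 W0 l m L0 t]]
      unfolding hf k1f k2f LL1 WL2 .
    have "k1 l (-(l+m)) = k1 m (-(l+m))" using C1[of l "-(l+m)"] by simp
    with e show ?thesis unfolding H by (simp add: algebra_simps)
  qed
  have K1: "k1 x t = k1 0 t" for x t
  proof -
    have "\<forall>s. s \<noteq> -c-x \<longrightarrow> ev2 (fst (mul W0 W0)) x s = ev2 (fst (mul W0 W0)) 0 s"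
    proof (intro allI impI)
      fix s assume "s \<noteq> -c-x"
      hence "c + s + x + 0 \<noteq> 0" by (metis add.right_neutral add_diff_cancel_right' add_uminus_conv_diff diff_add_cancel add.commute add_eq_0_iff2 diff_minus_eq_add minus_add_distrib)
      thus "ev2 (fst (mul W0 W0)) x s = ev2 (fst (mul W0 W0)) 0 s" using K1a[of s x 0] by (simp add: k1_def)
    qed
    moreover have "ev2 (fst (mul W0 W0)) x (-c-x) = ev2 (fst (mul W0 W0)) 0 (-c-x)" using calculation by (rule cont_t2)
    ultimately show ?thesis by (cases "t = -c-x") (auto simp: k1_def)
  qed
  have K10: "k1 x t = 0" for x t
  proof -
    have Z: "(c + t) * k1 0 t = 0" for t
    proof -
      have e: "(k1 0 (-(0+(-c-t))) * (c + t + (a - 1) * (0+(-c-t))) + k2 0 (-(0+(-c-t))) * k2 (0+(-c-t)) t)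
         - (k1 (-c-t) (t+0) * (c + t + 0) + k2 (-c-t) (t+0) * k2 0 t)
        = (k1 (-c-t) (-(0+(-c-t))) * (c + t + (a - 1) * (0+(-c-t))) + k2 (-c-t) (-(0+(-c-t))) * k2 (0+(-c-t)) t)
         - (k1 0 (t+(-c-t)) * (c + t + (-c-t)) + k2 0 (t+(-c-t)) * k2 (-c-t) t)"
        using conjunct2[OF ls_pt[OF cp ls, of W0 W0 0 "-c-t" W0 t]]
        unfolding k1f k2f LW2 WL2 .
      have eqa: "- 0 - (-(0+(-c-t))) = -c-t" by simp
      have 1: "k1 0 (-(0+(-c-t))) = k1 (-c-t) (-(0+(-c-t)))" using C1[of 0 "-(0+(-c-t))"] unfolding eqa .
      have 2: "k1 (-c-t) (t+0) = k1 0 t" using K1[of "-c-t" t] by simp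
      show ?thesis using e unfolding 1 2 P3 by (simp add: algebra_simps)
    qed
    have "\<forall>s. s \<noteq> -c \<longrightarrow> ev2 (fst (mul W0 W0)) 0 s = 0"
    proof (intro allI impI)
      fix s assume "s \<noteq> -c"
      hence "c + s \<noteq> 0" by (metis add_eq_0_iff2 add.commute minus_minus)
      thus "ev2 (fst (mul W0 W0)) 0 s = 0" using Z[of s] by (simp add: k1_def)
    qed
    moreover have "ev2 (fst (mul W0 W0)) 0 (-c) = 0" using calculation by (rule cont_t)
    ultimately have "k1 0 t = 0" by (cases "t = -c") (auto simp: k1_def)
    thus ?thesis using K1[of x t] by simp
  qed
  have z1: "fst (mul W0 L0) = 0" by (rule ev2_zero) (use H in \<open>simp add: h_def\<close>)
  have z2: "fst (mul L0 W0) = 0" by (rule ev2_zero) (use G in \<open>simp add: g_def\<close>)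
  have z3: "fst (mul W0 W0) = 0" by (rule ev2_zero) (use K10 in \<open>simp add: k1_def\<close>)
  have "snd (mul W0 W0) - [:[:K:]:] = 0"
    by (rule ev2_zero) (use P3 in \<open>simp add: k2_def ev2_def\<close>)
  hence z4: "snd (mul W0 W0) = [:[:K:]:]" by simp
  show ?thesis
  proof (cases "K = 0")
    case True
    have "mul W0 W0 = (0, 0)" using z3 z4 True by (simp add: prod_eq_iff)
    thus ?thesis using z1 z2 by simp
  next
    case False
    hence "a = 1" using P4 by blast
    thus ?thesis using z1 z2 z3 z4 False by blast
  qed
qed

end
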